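(* Let $A$ be a separable unital $C^{*}$-algebra, $\alpha\in\mathrm{Aut}(A)$, and let $u$ be the canonical unitary of $C^{*}(\mathbb{Z},A,\alpha)$. Let $\varepsilon>0$, $n\in\mathbb{N}$, and let $c_0,\ldots,c_n\in A$ satisfy: $0\le c_j\le1$ for $0\le j\le n$; $c_jc_k=0$ for $j\ne k$; and $\|\alpha(c_j)-c_{j+1}\|<\varepsilon$ for $0\le j\le n-1$. Then for $0\le j\le n$ and $1\le k\le n$, we have $\|c_ju^{-k}c_j\|<3n\varepsilon$ and $\|c_ju^kc_j\|<3n\varepsilon$.
   Context: $C^{*}(\mathbb{Z},A,\alpha)$ is the crossed product, containing $A$, with canonical unitary $u$ satisfying $uau^{*}=\alpha(a)$ for $a\in A$. *)

theory Defs
  imports "HOL-Analysis.Analysis"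
begin

class cstar_algebra = real_normed_algebra_1 + banach +
  fixes cscale :: "complex \<Rightarrow> 'a \<Rightarrow> 'a"
    and adj :: "'a \<Rightarrow> 'a"
  assumes cscale_of_real: "cscale (complex_of_real r) x = scaleR r x"
    and cscale_add_right: "cscale a (x + y) = cscale a x + cscale a y"
    and cscale_add_left: "cscale (a + b) x = cscale a x + cscale b x"
    and cscale_cscale: "cscale a (cscale b x) = cscale (a * b) x"
    and cscale_one: "cscale 1 x = x"
    and cscale_mult_left: "cscale a x * y = cscale a (x * y)"
    and cscale_mult_right: "x * cscale a y = cscale a (x * y)"
    and norm_cscale: "norm (cscale a x) = cmod a * norm x"
    and adj_adj: "adj (adj x) = x"
    and adj_add: "adj (x + y) = adj x + adj y"
    and adj_mult: "adj (x * y) = adj y * adj x"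
    and adj_cscale: "adj (cscale a x) = cscale (cnj a) (adj x)"
    and cstar_identity: "norm (adj x * x) = norm x ^ 2"

definition invertible_el :: "'a::cstar_algebra \<Rightarrow> bool" where
  "invertible_el x \<longleftrightarrow> (\<exists>y. x * y = 1 \<and> y * x = 1)"

definition spectrum :: "'a::cstar_algebra \<Rightarrow> complex set" where
  "spectrum x = {z. \<not> invertible_el (cscale z 1 - x)}"

definition positive_el :: "'a::cstar_algebra \<Rightarrow> bool" where
  "positive_el x \<longleftrightarrow> adj x = x \<and> spectrum x \<subseteq> complex_of_real ` {0..}"

definition between_0_1 :: "'a::cstar_algebra \<Rightarrow> bool" where
  "between_0_1 c \<longleftrightarrow> positive_el c \<and> positive_el (1 - c)"

definition unitary_el :: "'a::cstar_algebra \<Rightarrow> bool" where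
  "unitary_el u \<longleftrightarrow> adj u * u = 1 \<and> u * adj u = 1"

definition unital_cstar_subalgebra :: "'a::cstar_algebra set \<Rightarrow> bool" where
  "unital_cstar_subalgebra A \<longleftrightarrow>
     1 \<in> A \<and> (\<forall>x\<in>A. \<forall>y\<in>A. x + y \<in> A \<and> x * y \<in> A) \<and>
     (\<forall>a. \<forall>x\<in>A. cscale a x \<in> A) \<and> (\<forall>x\<in>A. adj x \<in> A) \<and> closed A"

definition separable_set :: "'a::cstar_algebra set \<Rightarrow> bool" where
  "separable_set A \<longleftrightarrow> (\<exists>D. countable D \<and> D \<subseteq> A \<and> A \<subseteq> closure D)"

definition star_automorphism :: "'a::cstar_algebra set \<Rightarrow> ('a \<Rightarrow> 'a) \<Rightarrow> bool" where
  "star_automorphism A \<alpha> \<longleftrightarrow> bij_betw \<alpha> A A \<and>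
     (\<forall>x\<in>A. \<forall>y\<in>A. \<alpha> (x + y) = \<alpha> x + \<alpha> y \<and> \<alpha> (x * y) = \<alpha> x * \<alpha> y) \<and>
     (\<forall>a. \<forall>x\<in>A. \<alpha> (cscale a x) = cscale a (\<alpha> x)) \<and>
     (\<forall>x\<in>A. \<alpha> (adj x) = adj (\<alpha> x))"

end

theory Submission
  imports Defs
begin

lemma cscale_zero_left: "cscale 0 x = 0"
  using cscale_of_real[of 0 x] by simp

lemma cscale_minus_left: "cscale (-a) x = - cscale a x"
proof -
  have "cscale a x + cscale (-a) x = 0" using cscale_add_left[of a "-a" x] by (simp add: cscale_zero_left)
  then show ?thesis by (metis add.commute eq_neg_iff_add_eq_0)
qed

lemma cscale_diff_left: "cscale (a - b) x = cscale a x - cscale b x"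
  using cscale_add_left[of a "-b" x] by (simp add: cscale_minus_left)

lemma cscale_zero_right: "cscale a (0::'a::cstar_algebra) = 0"
  using cscale_add_right[of a "0::'a" 0] by simp

lemma cscale_minus_right: "cscale a (- x) = - cscale a (x::'a::cstar_algebra)"
proof -
  have "cscale a x + cscale a (-x) = 0" using cscale_add_right[of a x "-x"] by (simp add: cscale_zero_right)
  then show ?thesis by (metis add.commute eq_neg_iff_add_eq_0)
qed

lemma cscale_diff_right: "cscale a (x - y) = cscale a x - cscale a (y::'a::cstar_algebra)"
  using cscale_add_right[of a x "-y"] by (simp add: cscale_minus_right)

lemma cscale_sum_left: "cscale (sum f S) (x::'a::cstar_algebra) = (\<Sum>i\<in>S. cscale (f i) x)"
  by (induction S rule: infinite_finite_induct) (auto simp: cscale_zero_left cscale_add_left)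

lemma cscale_power: "(cscale a x) ^ n = cscale (a ^ n) ((x::'a::cstar_algebra) ^ n)"
proof (induction n)
  case 0
  then show ?case by (simp add: cscale_one)
next
  case (Suc n)
  have "cscale a x ^ Suc n = cscale a x * cscale (a ^ n) (x ^ n)" using Suc by simp
  also have "\<dots> = cscale (a ^ Suc n) (x ^ Suc n)"
    by (simp add: cscale_mult_left cscale_mult_right cscale_cscale mult.commute)
  finally show ?case .
qed

lemma cscale_real: "cscale (complex_of_real r) x = r *\<^sub>R x"
  by (rule cscale_of_real)

lemma adj_one: "adj (1::'a::cstar_algebra) = 1"
proof -
  have "adj (1::'a) = adj 1 * adj (adj 1)" by (simp only: adj_adj mult_1_right)
  also have "\<dots> = adj (adj 1 * 1)" by (rule adj_mult[symmetric])
  also have "\<dots> = 1" by (simp only: adj_adj mult_1_right)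
  finally show ?thesis .
qed

lemma adj_power: "adj ((x::'a::cstar_algebra) ^ n) = adj x ^ n"
proof (induction n)
  case 0
  then show ?case by (simp add: adj_one)
next
  case (Suc n)
  have "adj (x ^ Suc n) = adj (x ^ n) * adj x" by (simp add: adj_mult)
  also have "\<dots> = adj x ^ Suc n" using Suc by (simp only: power_Suc2)
  finally show ?case .
qed

lemma norm_adj_le: "norm (adj (x::'a::cstar_algebra)) \<ge> norm x"
proof (cases "norm x = 0")
  case True
  then show ?thesis by simp
next
  case False
  have "norm x ^ 2 = norm (adj x * x)" by (simp add: cstar_identity)
  also have "\<dots> \<le> norm (adj x) * norm x" by (rule norm_mult_ineq)
  finally have "norm x * norm x \<le> norm (adj x) * norm x" by (simp add: power2_eq_square)
  moreover have "norm x > 0" using False by simp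
  ultimately show ?thesis by (rule mult_right_le_imp_le)
qed

lemma norm_adj: "norm (adj (x::'a::cstar_algebra)) = norm x"
  using norm_adj_le[of x] norm_adj_le[of "adj x"] by (simp add: adj_adj)

lemma norm_selfadj_pow2:
  assumes "adj x = (x::'a::cstar_algebra)"
  shows "norm (x ^ (2 ^ m)) = norm x ^ (2 ^ m)"
proof (induction m)
  case 0
  then show ?case by simp
next
  case (Suc m)
  have "x ^ (2 ^ Suc m) = adj (x ^ (2 ^ m)) * x ^ (2 ^ m)"
    by (simp add: adj_power assms power_add[symmetric] mult_2)
  then have "norm (x ^ (2 ^ Suc m)) = norm (x ^ (2 ^ m)) ^ 2"
    by (simp add: cstar_identity)
  also have "\<dots> = norm x ^ (2 ^ Suc m)" using Suc by (simp add: power_mult[symmetric] mult.commute)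
  finally show ?case .
qed

definition inv_el :: "'a::cstar_algebra \<Rightarrow> 'a" where
  "inv_el x = (SOME y. x * y = 1 \<and> y * x = 1)"

lemma inv_el: "invertible_el x \<Longrightarrow> x * inv_el x = 1 \<and> inv_el x * x = 1"
  unfolding inv_el_def invertible_el_def by (rule someI_ex)

lemma invertible_mult: "invertible_el x \<Longrightarrow> invertible_el y \<Longrightarrow> invertible_el (x * (y::'a::cstar_algebra))"
  unfolding invertible_el_def
proof (elim exE conjE)
  fix a b assume "x * a = 1" "a * x = 1" "y * b = 1" "b * y = 1"
  then show "\<exists>z. x * y * z = 1 \<and> z * (x * y) = 1"
    by (intro exI[of _ "b * a"]) (simp add: mult.assoc, metis mult.assoc mult_1_left)
qed

lemma invertible_cscale: "a \<noteq> 0 \<Longrightarrow> invertible_el x \<Longrightarrow> invertible_el (cscale a (x::'a::cstar_algebra))"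
  unfolding invertible_el_def
proof (elim exE conjE)
  fix b assume a: "a \<noteq> 0" and "x * b = 1" "b * x = 1"
  then show "\<exists>z. cscale a x * z = 1 \<and> z * cscale a x = 1"
    by (intro exI[of _ "cscale (1/a) b"]) (simp add: cscale_mult_left cscale_mult_right cscale_cscale cscale_one)
qed

lemma invertible_minus: "invertible_el (- x) \<Longrightarrow> invertible_el (x::'a::cstar_algebra)"
  unfolding invertible_el_def
proof (elim exE conjE)
  fix y assume "- x * y = 1" "y * - x = 1"
  then show "\<exists>z. x * z = 1 \<and> z * x = 1" by (intro exI[of _ "- y"]) simp
qed

lemma one_invertible: "invertible_el (1::'a::cstar_algebra)"
  unfolding invertible_el_def by auto

lemma spec_bound:
  assumes "between_0_1 (c::'a::cstar_algebra)" and "cmod z > 1"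
  shows "invertible_el (cscale z 1 - c)"
proof (rule ccontr)
  assume ni: "\<not> invertible_el (cscale z 1 - c)"
  then have "z \<in> spectrum c" unfolding spectrum_def by simp
  with assms(1) obtain r where r: "z = complex_of_real r" "r \<ge> 0"
    unfolding between_0_1_def positive_el_def by auto
  have "cscale (1 - z) 1 - (1 - c) = - (cscale z 1 - c)"
    by (simp add: cscale_diff_left cscale_one)
  then have "\<not> invertible_el (cscale (1 - z) 1 - (1 - c))"
    using ni invertible_minus by metis
  then have "1 - z \<in> spectrum (1 - c)" unfolding spectrum_def by simp
  with assms(1) obtain s where s: "1 - z = complex_of_real s" "s \<ge> 0"
    unfolding between_0_1_def positive_el_def by auto
  from r s have "r \<le> 1"
    by (metis diff_ge_0_iff_ge of_real_1 of_real_diff of_real_eq_iff)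
  with r assms(2) show False by simp
qed

section \<open>Roots of unity\<close>

lemma one_minus_geom: "(1 - v) * (\<Sum>i<n. v ^ i) = 1 - (v::'a::ring_1) ^ n"
proof (induction n)
  case 0
  then show ?case by simp
next
  case (Suc n)
  have "(1 - v) * (\<Sum>i<Suc n. v ^ i) = (1 - v) * (\<Sum>i<n. v ^ i) + (1 - v) * v ^ n"
    by (simp add: distrib_left)
  also have "\<dots> = 1 - v ^ Suc n" using Suc by (simp add: algebra_simps)
  finally show ?case .
qed

definition rou :: "nat \<Rightarrow> complex" where "rou n = cis (2 * pi / real n)"

lemma rou_norm: "cmod (rou n ^ k) = 1"
  by (simp add: rou_def norm_power)

lemma rou_pow_n: assumes "n > 0" shows "(rou n ^ k) ^ n = 1"
proof -
  have "(rou n ^ k) ^ n = rou n ^ (k * n)" by (simp add: power_mult)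
  also have "\<dots> = cis (real (k * n) * (2 * pi / real n))"
    by (simp only: rou_def Complex.DeMoivre)
  also have "real (k * n) * (2 * pi / real n) = 2 * pi * real k" using assms by (simp add: field_simps)
  finally show ?thesis by simp
qed

lemma rou_sum: assumes "0 < i" "i < n" shows "(\<Sum>k<n. (rou n ^ k) ^ i) = 0"
proof -
  define z where "z = rou n ^ i"
  have eq: "(rou n ^ k) ^ i = z ^ k" for k by (simp add: z_def power_mult[symmetric] mult.commute)
  have zn: "z ^ n = 1" using rou_pow_n[of n i] assms by (simp add: z_def power_mult[symmetric] mult.commute)
  have "z \<noteq> 1"
  proof
    assume "z = 1"
    then have "cis (real i * (2 * pi / real n)) = 1"
      by (simp only: z_def rou_def Complex.DeMoivre)
    then have "exp (\<i> * complex_of_real (real i * (2 * pi / real n))) = 1"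
      by (simp only: cis_conv_exp)
    then obtain m :: int where m: "real i * (2 * pi / real n) = of_int (2 * m) * pi"
      by (auto simp: exp_eq_1)
    then have "real i = real n * of_int m" using assms by (simp add: field_simps)
    then have "int i = int n * m" by (metis of_int_eq_iff of_int_mult of_int_of_nat_eq)
    note im = this
    show False
    proof (cases "m \<le> 0")
      case True
      then have "int n * m \<le> 0" by (simp add: mult_nonneg_nonpos)
      with im assms show False by simp
    next
      case False
      then have "int n * 1 \<le> int n * m" by (intro mult_left_mono) auto
      with im assms show False by simp
    qed
  qed
  then have "(\<Sum>k<n. z ^ k) = 0" by (simp add: geometric_sum zn)
  then show ?thesis by (simp add: eq)
qed

section \<open>Rickart's elementary spectral radius argument\<close>

lemma rickart:
  fixes y :: "'a::cstar_algebra"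
  assumes inv: "\<And>l. cmod l \<le> 1 \<Longrightarrow> invertible_el (1 - cscale l y)"
  shows "\<exists>N. \<forall>n\<ge>N. norm (y ^ n) \<le> 1/2"
proof -
  define g where "g l = inv_el (1 - cscale l y)" for l
  define D where "D = cball (0::complex) 1"
  have inD: "l \<in> D \<longleftrightarrow> cmod l \<le> 1" for l by (simp add: D_def)
  have gD: "g l * (1 - cscale l y) = 1" "(1 - cscale l y) * g l = 1" if "l \<in> D" for l
    using inv_el[OF inv[of l]] that by (auto simp: g_def inD)
  have res: "g l - g m = g l * cscale (l - m) y * g m" if "l \<in> D" "m \<in> D" for l m
  proof -
    have "g l * cscale (l - m) y * g m = g l * ((1 - cscale m y) - (1 - cscale l y)) * g m"
      by (simp add: cscale_diff_left)
    also have "\<dots> = g l * ((1 - cscale m y) * g m) - (g l * (1 - cscale l y)) * g m"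
      by (simp add: right_diff_distrib left_diff_distrib mult.assoc)
    also have "\<dots> = g l - g m" using gD that by simp
    finally show ?thesis by simp
  qed
  have resn: "norm (g l - g m) \<le> cmod (l - m) * norm y * (norm (g l) * norm (g m))"
    if "l \<in> D" "m \<in> D" for l m
  proof -
    have "norm (g l - g m) \<le> norm (g l * cscale (l - m) y) * norm (g m)"
      unfolding res[OF that] by (rule norm_mult_ineq)
    also have "\<dots> \<le> (norm (g l) * norm (cscale (l - m) y)) * norm (g m)"
      by (intro mult_right_mono norm_mult_ineq) auto
    also have "\<dots> = cmod (l - m) * norm y * (norm (g l) * norm (g m))"
      by (simp add: norm_cscale)
    finally show ?thesis .
  qed
  have cont: "continuous_on D g"
    unfolding continuous_on_iff
  proof (intro ballI allI impI)
    fix m e assume m: "m \<in> D" and e: "(e::real) > 0"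
    define K where "K = norm (g m)"
    define Y where "Y = norm y"
    define P where "P = Y * K"
    have P0: "P \<ge> 0" by (simp add: P_def K_def Y_def)
    define d where "d = min (1 / (2 * P + 1)) (e / (2 * P * K + 1))"
    have K0: "K \<ge> 0" by (simp add: K_def)
    have PK0: "P * K \<ge> 0" using P0 K0 by simp
    have d0: "d > 0" using P0 PK0 e by (simp add: d_def)
    show "\<exists>d>0. \<forall>x'\<in>D. dist x' m < d \<longrightarrow> dist (g x') (g m) < e"
    proof (intro exI[of _ d] conjI ballI impI d0)
      fix l assume l: "l \<in> D" and dl: "dist l m < d"
      define a where "a = cmod (l - m)"
      have a0: "a \<ge> 0" by (simp add: a_def)
      have ad: "a < d" using dl by (simp add: a_def dist_norm)
      have "a * P \<le> (1 / (2 * P + 1)) * P"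
        using ad P0 by (intro mult_right_mono) (auto simp: d_def)
      also have "\<dots> \<le> 1/2" using P0 by (simp add: field_simps)
      finally have aP: "a * P \<le> 1/2" .
      have "norm (g l) \<le> K + norm (g l - g m)"
        using norm_triangle_ineq[of "g l - g m" "g m"] by (simp add: K_def)
      also have "norm (g l - g m) \<le> a * Y * (norm (g l) * K)"
        using resn[OF l m] by (simp add: a_def Y_def K_def)
      also have "a * Y * (norm (g l) * K) = (a * P) * norm (g l)" by (simp add: P_def)
      also have "\<dots> \<le> 1/2 * norm (g l)" using aP by (intro mult_right_mono) auto
      finally have gl: "norm (g l) \<le> 2 * K" by simp
      have "dist (g l) (g m) \<le> a * Y * (norm (g l) * K)"
        using resn[OF l m] by (simp add: a_def Y_def K_def dist_norm)
      also have "\<dots> \<le> a * Y * (2 * K * K)"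
        using gl a0 K0 by (intro mult_left_mono mult_right_mono) (auto simp: Y_def)
      also have "\<dots> = a * (2 * P * K)" by (simp add: P_def)
      also have "\<dots> \<le> (e / (2 * P * K + 1)) * (2 * P * K)"
        using ad PK0 by (intro mult_right_mono) (auto simp: d_def mult.commute)
      also have "\<dots> < e" using PK0 e by (simp add: field_simps)
      finally show "dist (g l) (g m) < e" .
    qed
  qed
  have "compact (g ` D)"
    by (rule compact_continuous_image[OF cont]) (simp add: D_def)
  then obtain M where M0: "M > 0" and M: "\<And>l. l \<in> D \<Longrightarrow> norm (g l) \<le> M"
    using compact_imp_bounded bounded_pos by (metis image_eqI)
  define L where "L = norm y * M * M"
  have L0: "L \<ge> 0" using M0 by (simp add: L_def)
  have lip: "norm (g l - g m) \<le> L * cmod (l - m)" if "l \<in> D" "m \<in> D" for l m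
  proof -
    have "norm (g l) * norm (g m) \<le> M * M"
      using M that M0 by (intro mult_mono) auto
    then have "cmod (l - m) * norm y * (norm (g l) * norm (g m)) \<le> cmod (l - m) * norm y * (M * M)"
      by (intro mult_left_mono) auto
    then have "norm (g l - g m) \<le> cmod (l - m) * norm y * (M * M)"
      using resn[OF that] by linarith
    also have "\<dots> = L * cmod (l - m)" by (simp add: L_def)
    finally show ?thesis .
  qed
  define A where "A n l = scaleR (1 / real n) (\<Sum>k<n. g (rou n ^ k * l))" for n l
  have rD: "rou n ^ k * l \<in> D" if "l \<in> D" for n k l
    using that by (simp add: inD norm_mult rou_norm)
  have Ainv: "A n l * (1 - cscale l y ^ n) = 1" if n: "n > 0" and l: "l \<in> D" for n l
  proof -
    define w where "w = cscale l y"
    define v where "v k = cscale (rou n ^ k * l) y" for k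
    define S where "S k = (\<Sum>i<n. v k ^ i)" for k
    have vw: "v k = cscale (rou n ^ k) w" for k by (simp add: v_def w_def cscale_cscale)
    have vn: "v k ^ n = w ^ n" for k
      using rou_pow_n[OF n, of k] by (simp add: vw cscale_power cscale_one)
    have gk: "g (rou n ^ k * l) * (1 - w ^ n) = S k" for k
    proof -
      have "g (rou n ^ k * l) * (1 - w ^ n) = g (rou n ^ k * l) * ((1 - v k) * S k)"
        by (simp add: S_def one_minus_geom vn)
      also have "\<dots> = (g (rou n ^ k * l) * (1 - v k)) * S k" by (simp add: mult.assoc)
      also have "\<dots> = S k" using gD(1)[OF rD[OF l, of n k]] by (simp add: v_def)
      finally show ?thesis .
    qed
    have Sk: "S k = (\<Sum>i<n. cscale ((rou n ^ k) ^ i) (w ^ i))" for k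
      by (simp add: S_def vw cscale_power)
    have "(\<Sum>k<n. S k) = (\<Sum>k<n. \<Sum>i<n. cscale ((rou n ^ k) ^ i) (w ^ i))"
      by (simp add: Sk)
    also have "\<dots> = (\<Sum>i<n. \<Sum>k<n. cscale ((rou n ^ k) ^ i) (w ^ i))"
      by (rule sum.swap)
    also have "\<dots> = (\<Sum>i<n. cscale (\<Sum>k<n. (rou n ^ k) ^ i) (w ^ i))"
      by (simp add: cscale_sum_left)
    also have "\<dots> = of_nat n"
    proof -
      define F where "F i = cscale (\<Sum>k<n. (rou n ^ k) ^ i) (w ^ i)" for i
      have "(\<Sum>i<n. F i) = F 0 + (\<Sum>i\<in>{..<n} - {0}. F i)"
        using n by (intro sum.remove) auto
      also have "(\<Sum>i\<in>{..<n} - {0}. F i) = 0"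
      proof (intro sum.neutral ballI)
        fix i assume "i \<in> {..<n} - {0}"
        then have "(\<Sum>k<n. (rou n ^ k) ^ i) = 0" by (intro rou_sum) auto
        then show "F i = 0" unfolding F_def using cscale_zero_left by metis
      qed
      also have "F 0 = cscale (of_nat n) 1" by (simp add: F_def)
      also have "cscale (of_nat n) (1::'a) = of_nat n"
      proof -
        have "cscale (of_nat n) (1::'a) = cscale (complex_of_real (real n)) 1" by simp
        also have "\<dots> = real n *\<^sub>R 1" by (rule cscale_of_real)
        also have "\<dots> = of_nat n" by (metis of_real_def of_real_of_nat_eq)
        finally show ?thesis .
      qed
      finally show ?thesis by (simp add: F_def)
    qed
    finally have sumS: "(\<Sum>k<n. S k) = of_nat n" .
    have "A n l * (1 - w ^ n) = scaleR (1 / real n) (\<Sum>k<n. g (rou n ^ k * l) * (1 - w ^ n))"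
      by (simp add: A_def sum_distrib_right)
    also have "\<dots> = scaleR (1 / real n) (of_nat n)" by (simp add: gk sumS)
    also have "\<dots> = scaleR (1 / real n) (real n *\<^sub>R (1::'a))" by (metis of_real_def of_real_of_nat_eq)
    also have "\<dots> = 1" using n by simp
    finally show ?thesis by (simp add: w_def)
  qed
  have Abound: "norm (A n l) \<le> M" if n: "n > 0" and l: "l \<in> D" for n l
  proof -
    have "norm (A n l) = (1 / real n) * norm (\<Sum>k<n. g (rou n ^ k * l))" by (simp add: A_def)
    also have "\<dots> \<le> (1 / real n) * (\<Sum>k<n. norm (g (rou n ^ k * l)))"
      by (intro mult_left_mono norm_sum) auto
    also have "\<dots> \<le> (1 / real n) * (\<Sum>k<n. M)"
      using M rD[OF l] by (intro mult_left_mono sum_mono) auto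
    also have "\<dots> = M" using n by simp
    finally show ?thesis .
  qed
  have Alip: "norm (A n l - A n m) \<le> L * cmod (l - m)" if n: "n > 0" and l: "l \<in> D" and m: "m \<in> D" for n l m
  proof -
    have "A n l - A n m = scaleR (1 / real n) (\<Sum>k<n. g (rou n ^ k * l) - g (rou n ^ k * m))"
      by (simp add: A_def sum_subtractf scaleR_diff_right)
    then have "norm (A n l - A n m) = (1 / real n) * norm (\<Sum>k<n. g (rou n ^ k * l) - g (rou n ^ k * m))"
      by simp
    also have "\<dots> \<le> (1 / real n) * (\<Sum>k<n. norm (g (rou n ^ k * l) - g (rou n ^ k * m)))"
      by (intro mult_left_mono norm_sum) auto
    also have "\<dots> \<le> (1 / real n) * (\<Sum>k<n. L * cmod (l - m))"
    proof (intro mult_left_mono sum_mono)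
      fix k
      have "norm (g (rou n ^ k * l) - g (rou n ^ k * m)) \<le> L * cmod (rou n ^ k * l - rou n ^ k * m)"
        by (rule lip[OF rD[OF l] rD[OF m]])
      also have "cmod (rou n ^ k * l - rou n ^ k * m) = cmod (l - m)"
        by (simp add: right_diff_distrib[symmetric] norm_mult rou_norm)
      finally show "norm (g (rou n ^ k * l) - g (rou n ^ k * m)) \<le> L * cmod (l - m)" .
    qed auto
    also have "\<dots> = L * cmod (l - m)" using n by simp
    finally show ?thesis .
  qed
  have wn: "cscale (complex_of_real t) y ^ n = cscale (complex_of_real (t ^ n)) (y ^ n)" for t n
    by (simp add: cscale_power)
  have nwn: "norm (cscale (complex_of_real t) y ^ n) = t ^ n * norm (y ^ n)" if "t \<ge> 0" for t n
    using that by (simp add: wn norm_cscale norm_power)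
  have tD: "complex_of_real t \<in> D" if "0 \<le> t" "t \<le> 1" for t
    using that by (simp add: inD)
  have est1: "norm (A n (complex_of_real t) - 1) \<le> M * (t ^ n * norm (y ^ n))"
    if n: "n > 0" and t: "0 \<le> t" "t \<le> 1" for n t
  proof -
    define W where "W = cscale (complex_of_real t) y ^ n"
    have "A n (complex_of_real t) * (1 - W) = 1" using Ainv[OF n tD[OF t]] by (simp add: W_def)
    then have "A n (complex_of_real t) - 1 = A n (complex_of_real t) * W"
      by (simp add: right_diff_distrib algebra_simps)
    then have "norm (A n (complex_of_real t) - 1) \<le> norm (A n (complex_of_real t)) * norm W"
      by (simp add: norm_mult_ineq)
    also have "\<dots> \<le> M * norm W"
      using Abound[OF n tD[OF t]] by (intro mult_right_mono) auto
    finally show ?thesis using nwn t by (simp add: W_def)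
  qed
  have est2: "t ^ n * norm (y ^ n) \<le> 1/2"
    if n: "n > 0" and t: "0 \<le> t" "t \<le> 1" and h: "norm (A n (complex_of_real t) - 1) \<le> 1/3" for n t
  proof -
    define W where "W = cscale (complex_of_real t) y ^ n"
    define B where "B = A n (complex_of_real t)"
    have "B * (1 - W) = 1" using Ainv[OF n tD[OF t]] by (simp add: W_def B_def)
    then have "W = (B - 1) * (1 - W)" by (simp add: algebra_simps)
    then have "norm W \<le> norm (B - 1) * norm (1 - W)" by (metis norm_mult_ineq)
    also have "\<dots> \<le> 1/3 * (1 + norm W)"
      using h norm_triangle_ineq4[of 1 W] by (intro mult_mono) (auto simp: B_def)
    finally have "norm W \<le> 1/2" by simp
    then show ?thesis using nwn t by (simp add: W_def)
  qed
  define \<delta> where "\<delta> = 1 / (12 * (L + 1))"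
  have \<delta>0: "\<delta> > 0" using L0 by (simp add: \<delta>_def)
  have L\<delta>: "L * \<delta> \<le> 1/12" using L0 by (simp add: \<delta>_def field_simps)
  define P where "P s \<longleftrightarrow> 0 \<le> s \<and> s \<le> 1 \<and> (\<exists>N. \<forall>n\<ge>N. s ^ n * norm (y ^ n) \<le> 1/2)" for s
  have step: "P (min 1 (s + \<delta>/2))" if Ps: "P s" for s
  proof -
    from Ps obtain N where s0: "0 \<le> s" and s1: "s \<le> 1" and N: "\<And>n. n \<ge> N \<Longrightarrow> s ^ n * norm (y ^ n) \<le> 1/2"
      by (auto simp: P_def)
    define t where "t = max 0 (s - \<delta>/2)"
    define t' where "t' = min 1 (s + \<delta>/2)"
    have t0: "0 \<le> t" "t \<le> 1" using s1 \<delta>0 by (auto simp: t_def)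
    have t'0: "0 \<le> t'" "t' \<le> 1" using s0 \<delta>0 by (auto simp: t'_def)
    have tt': "cmod (complex_of_real t' - complex_of_real t) \<le> \<delta>"
    proof -
      have "\<bar>t' - t\<bar> \<le> \<delta>" using s0 s1 \<delta>0 by (auto simp: t_def t'_def)
      then show ?thesis by (metis norm_of_real of_real_diff real_norm_def)
    qed
    obtain N2 where N2: "\<And>n. n \<ge> N2 \<Longrightarrow> M * (t ^ n * norm (y ^ n)) \<le> 1/6"
    proof (cases "t = 0")
      case True
      then show ?thesis using that[of 1] by (auto simp: power_0_left)
    next
      case False
      then have ts: "t = s - \<delta>/2" "t > 0" using t0 by (auto simp: t_def)
      have sp: "s > 0" using ts \<delta>0 by simp
      define r where "r = t / s"
      have r0: "0 \<le> r" "r < 1" using ts sp \<delta>0 by (auto simp: r_def)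
      obtain N1 where N1: "r ^ N1 < 1 / (3 * M)"
        using real_arch_pow_inv[of "1 / (3 * M)" r] r0 M0 by auto
      show ?thesis
      proof (rule that[of "max N N1"])
        fix n assume "max N N1 \<le> n"
        then have nN: "N \<le> n" "N1 \<le> n" by auto
        have "t ^ n * norm (y ^ n) = r ^ n * (s ^ n * norm (y ^ n))"
          using sp by (simp add: r_def power_divide)
        also have "\<dots> \<le> r ^ N1 * (1/2)"
          using N[OF nN(1)] power_decreasing[OF nN(2), of r] r0
            mult_nonneg_nonneg[OF zero_le_power[OF s0] norm_ge_zero, of n "y ^ n"]
          by (intro mult_mono) auto
        also have "\<dots> \<le> 1 / (3 * M) * (1/2)" using N1 by simp
        finally have "t ^ n * norm (y ^ n) \<le> 1 / (6 * M)" by simp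
        then have "M * (t ^ n * norm (y ^ n)) \<le> M * (1 / (6 * M))"
          using M0 by (intro mult_left_mono) auto
        then show "M * (t ^ n * norm (y ^ n)) \<le> 1/6" using M0 by simp
      qed
    qed
    have "\<forall>n\<ge>max N2 1. t' ^ n * norm (y ^ n) \<le> 1/2"
    proof (intro allI impI)
      fix n assume "max N2 1 \<le> n"
      then have n: "n > 0" and nN2: "N2 \<le> n" by auto
      have "norm (A n (complex_of_real t') - 1)
          \<le> norm (A n (complex_of_real t') - A n (complex_of_real t)) + norm (A n (complex_of_real t) - 1)"
        using norm_triangle_ineq[of "A n (complex_of_real t') - A n (complex_of_real t)" "A n (complex_of_real t) - 1"]
        by simp
      also have "\<dots> \<le> L * \<delta> + 1/6"
      proof (rule add_mono)
        have "norm (A n (complex_of_real t') - A n (complex_of_real t)) \<le> L * cmod (complex_of_real t' - complex_of_real t)"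
          by (rule Alip[OF n tD[OF t'0] tD[OF t0]])
        also have "\<dots> \<le> L * \<delta>" using tt' L0 by (intro mult_left_mono) auto
        finally show "norm (A n (complex_of_real t') - A n (complex_of_real t)) \<le> L * \<delta>" .
        show "norm (A n (complex_of_real t) - 1) \<le> 1/6"
          using est1[OF n t0] N2[OF nN2] by linarith
      qed
      also have "\<dots> \<le> 1/3" using L\<delta> by simp
      finally show "t' ^ n * norm (y ^ n) \<le> 1/2" by (rule est2[OF n t'0])
    qed
    then have "\<exists>N. \<forall>n\<ge>N. t' ^ n * norm (y ^ n) \<le> 1/2" by blast
    then show ?thesis using t'0 unfolding P_def t'_def[symmetric] by blast
  qed
  have Pj: "P (min 1 (real j * \<delta> / 2))" for j
  proof (induction j)
    case 0
    have "\<forall>n\<ge>1. (0::real) ^ n * norm (y ^ n) \<le> 1/2" by (simp add: power_0_left)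
    then show ?case unfolding P_def by auto
  next
    case (Suc j)
    have "min 1 (min 1 (real j * \<delta> / 2) + \<delta> / 2) = min 1 (real (Suc j) * \<delta> / 2)"
      using \<delta>0 by (auto simp: min_def field_simps)
    then show ?case using step[OF Suc] by simp
  qed
  obtain j :: nat where j: "2 / \<delta> \<le> real j" using real_arch_simple by blast
  have "real j * \<delta> / 2 \<ge> 1" using j \<delta>0 by (simp add: field_simps)
  then have "P 1" using Pj[of j] by (simp add: min_def split: if_splits)
  then obtain N where "\<forall>n\<ge>N. (1::real) ^ n * norm (y ^ n) \<le> 1/2" unfolding P_def by blast
  then show ?thesis by (intro exI[of _ N]) simp
qed

section \<open>Norm bound for 0 <= c <= 1\<close>

lemma between_norm_le1:
  assumes "between_0_1 (c::'a::cstar_algebra)"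
  shows "norm c \<le> 1"
proof (rule ccontr)
  assume "\<not> norm c \<le> 1"
  then have c1: "norm c > 1" by simp
  define \<rho> where "\<rho> = (1 + norm c) / 2"
  have \<rho>1: "\<rho> > 1" "\<rho> < norm c" using c1 by (auto simp: \<rho>_def)
  define y where "y = cscale (complex_of_real (1 / \<rho>)) c"
  have sa: "adj c = c" using assms by (simp add: between_0_1_def positive_el_def)
  have ya: "adj y = y" by (simp add: y_def adj_cscale sa)
  have ny: "norm y = norm c / \<rho>" using \<rho>1 by (simp add: y_def norm_cscale norm_divide)
  have ny1: "norm y > 1" using \<rho>1 by (simp add: ny field_simps)
  have inv: "invertible_el (1 - cscale l y)" if l1: "cmod l \<le> 1" for l
  proof (cases "l = 0")
    case True
    then show ?thesis by (simp add: cscale_zero_left one_invertible)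
  next
    case False
    then have lp: "cmod l > 0" by simp
    have "\<rho> \<le> \<rho> / cmod l" using lp l1 \<rho>1 by (simp add: field_simps)
    then have "cmod (complex_of_real \<rho> / l) > 1" using \<rho>1 by (simp add: norm_divide)
    then have "invertible_el (cscale (complex_of_real \<rho> / l) 1 - c)" by (rule spec_bound[OF assms])
    then have i: "invertible_el (cscale (l / complex_of_real \<rho>) (cscale (complex_of_real \<rho> / l) 1 - c))"
      using False \<rho>1 by (intro invertible_cscale) auto
    have eq: "cscale (l / complex_of_real \<rho>) (cscale (complex_of_real \<rho> / l) 1 - c) = 1 - cscale l y"
    proof -
      have e1: "(l / complex_of_real \<rho>) * (complex_of_real \<rho> / l) = 1" using False \<rho>1 by simp
      have e2: "l * complex_of_real (1 / \<rho>) = l / complex_of_real \<rho>" by (simp add: divide_inverse)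
      have "cscale (l / complex_of_real \<rho>) (cscale (complex_of_real \<rho> / l) 1 - c)
          = cscale ((l / complex_of_real \<rho>) * (complex_of_real \<rho> / l)) 1 - cscale (l / complex_of_real \<rho>) c"
        by (simp only: cscale_diff_right cscale_cscale)
      also have "\<dots> = 1 - cscale (l / complex_of_real \<rho>) c" by (simp only: e1 cscale_one)
      also have "cscale (l / complex_of_real \<rho>) c = cscale l y" by (simp only: y_def cscale_cscale e2)
      finally show ?thesis .
    qed
    show ?thesis using i unfolding eq .
  qed
  obtain N where N: "\<forall>n\<ge>N. norm (y ^ n) \<le> 1/2" using rickart[OF inv] by blast
  have "N \<le> 2 ^ N" using less_exp[of N] by simp
  then have "norm (y ^ (2 ^ N)) \<le> 1/2" using N by blast
  moreover have "norm (y ^ (2 ^ N)) = norm y ^ (2 ^ N)" by (rule norm_selfadj_pow2[OF ya])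
  moreover have "norm y ^ (2 ^ N) \<ge> 1" using ny1 by (intro one_le_power) simp
  ultimately show False by simp
qed

theorem lemma2p2:
  fixes A :: "'a::cstar_algebra set" and \<alpha> :: "'a \<Rightarrow> 'a" and u :: 'a
    and c :: "nat \<Rightarrow> 'a" and n :: nat and \<epsilon> :: real
  assumes "unital_cstar_subalgebra A" and "separable_set A"
    and "star_automorphism A \<alpha>"
    and "unitary_el u" and "\<forall>a\<in>A. u * a * adj u = \<alpha> a"
    and "\<epsilon> > 0"
    and "\<forall>j\<le>n. c j \<in> A \<and> between_0_1 (c j)"
    and "\<forall>j\<le>n. \<forall>k\<le>n. j \<noteq> k \<longrightarrow> c j * c k = 0"
    and "\<forall>j<n. norm (\<alpha> (c j) - c (Suc j)) < \<epsilon>"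
  shows "\<forall>j\<le>n. \<forall>k\<in>{1..n}.
           norm (c j * adj u ^ k * c j) < 3 * real n * \<epsilon> \<and>
           norm (c j * u ^ k * c j) < 3 * real n * \<epsilon>"
proof -
  define v where "v = adj u"
  have uv: "v * u = 1" "u * v = 1" using assms(4) by (auto simp: unitary_el_def v_def)
  have nu: "norm u \<le> 1"
  proof -
    have "norm u ^ 2 = norm (adj u * u)" by (simp add: cstar_identity)
    also have "\<dots> = 1" using uv by (simp add: v_def)
    finally have "norm u ^ 2 = 1" .
    then have "norm u = 1 \<or> norm u = - 1" by (simp add: power2_eq_1_iff)
    then show ?thesis by auto
  qed
  have nv: "norm v \<le> 1" using nu by (simp add: v_def norm_adj)
  have nuk: "norm (u ^ k) \<le> 1" for k
    using norm_power_ineq[of u k] power_le_one[OF norm_ge_zero nu, of k] by linarith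
  have nvk: "norm (v ^ k) \<le> 1" for k
    using norm_power_ineq[of v k] power_le_one[OF norm_ge_zero nv, of k] by linarith
  have VU: "v ^ k * u ^ k = 1" for k
  proof (induction k)
    case (Suc k)
    have a: "v ^ Suc k = v ^ k * v" by (rule power_Suc2)
    have b: "u ^ Suc k = u * u ^ k" by (rule power_Suc)
    have "v ^ Suc k * u ^ Suc k = v ^ k * (v * u) * u ^ k" by (simp only: a b mult.assoc)
    then show ?case using Suc uv by simp
  qed simp
  have VUz: "v ^ k * (u ^ k * z) = z" for k z by (simp add: mult.assoc[symmetric] VU)
  have cA: "c j \<in> A" if "j \<le> n" for j using assms(7) that by blast
  have nc: "norm (c j) \<le> 1" if "j \<le> n" for j using assms(7) that between_norm_le1 by blast
  have sa: "adj (c j) = c j" if "j \<le> n" for j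
    using assms(7) that by (auto simp: between_0_1_def positive_el_def)
  have orth: "c j * c k = 0" if "j \<le> n" "k \<le> n" "j \<noteq> k" for j k
    using assms(8) that by blast
  have alpha: "\<alpha> (c j) = u * c j * v" if "j \<le> n" for j
    using assms(5) cA[OF that] by (simp add: v_def)
  have sandw: "norm (a * z * b) \<le> norm z" if "norm a \<le> 1" "norm b \<le> 1" for a b z :: 'a
  proof -
    have "norm (a * z * b) \<le> norm a * norm z * norm b"
      by (metis mult_right_mono norm_ge_zero norm_mult_ineq order_trans)
    also have "\<dots> \<le> 1 * norm z * 1" using that by (intro mult_mono) auto
    finally show ?thesis by simp
  qed
  have shift: "norm (u ^ i * c j * v ^ i - c (j + i)) \<le> real i * \<epsilon>" if "j + i \<le> n" for i j
    using that
  proof (induction i)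
    case 0
    then show ?case by simp
  next
    case (Suc i)
    have ji: "j + i < n" using Suc.prems by simp
    define X where "X = u ^ i * c j * v ^ i"
    have eqn: "u ^ Suc i * c j * v ^ Suc i - c (j + Suc i)
        = u * (X - c (j + i)) * v + (\<alpha> (c (j + i)) - c (Suc (j + i)))"
    proof -
      have e: "u ^ Suc i * c j * v ^ Suc i = u * X * v"
        by (simp only: X_def power_Suc[of u i] power_Suc2[of v i] mult.assoc)
      show ?thesis using alpha[of "j + i"] ji unfolding e by (simp add: algebra_simps)
    qed
    have "norm (u ^ Suc i * c j * v ^ Suc i - c (j + Suc i))
        \<le> norm (u * (X - c (j + i)) * v) + norm (\<alpha> (c (j + i)) - c (Suc (j + i)))"
      unfolding eqn by (rule norm_triangle_ineq)
    also have "\<dots> \<le> real i * \<epsilon> + \<epsilon>"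
    proof (rule add_mono)
      show "norm (u * (X - c (j + i)) * v) \<le> real i * \<epsilon>"
        using sandw[OF nu nv, of "X - c (j + i)"] Suc.IH ji by (simp add: X_def)
      show "norm (\<alpha> (c (j + i)) - c (Suc (j + i))) \<le> \<epsilon>"
        using assms(9) ji by (simp add: less_imp_le)
    qed
    finally show ?case by (simp add: distrib_right)
  qed
  have key: "norm (c j * u ^ k * c j) \<le> real k * \<epsilon>" if j: "j \<le> n" and k: "1 \<le> k" "k \<le> n" for j k
  proof (cases "k \<le> j")
    case True
    define i where "i = j - k"
    have ik: "i + k = j" using True by (simp add: i_def)
    define X where "X = u ^ k * c i * v ^ k"
    have dX: "norm (c j - X) \<le> real k * \<epsilon>"
      using shift[of i k] ik j by (simp add: X_def norm_minus_commute)
    have "X * (u ^ k * c j) = u ^ k * (c i * c j)" by (simp add: X_def mult.assoc VUz)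
    also have "c i * c j = 0" using orth[of i j] ik j k by simp
    finally have X0: "X * (u ^ k * c j) = 0" by simp
    have "c j * u ^ k * c j = (c j - X) * (u ^ k * c j) + X * (u ^ k * c j)"
      by (simp add: algebra_simps)
    also have "\<dots> = (c j - X) * (u ^ k * c j)" using X0 by simp
    finally have "norm (c j * u ^ k * c j) \<le> norm (c j - X) * norm (u ^ k * c j)"
      by (simp add: norm_mult_ineq)
    also have "\<dots> \<le> real k * \<epsilon> * 1"
    proof (rule mult_mono)
      show "norm (u ^ k * c j) \<le> 1"
        using sandw[OF nuk[of k] norm_one[THEN eq_refl], of "c j"] nc[OF j] by simp
    qed (use dX assms(6) in auto)
    finally show ?thesis by simp
  next
    case False
    define p where "p = k - j"
    have jp: "j + p = k" using False by (simp add: p_def)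
    define Y where "Y = u ^ j * c 0 * v ^ j"
    define X where "X = u ^ p * c j * v ^ p"
    have dY: "norm (c j - Y) \<le> real j * \<epsilon>"
      using shift[of 0 j] j by (simp add: Y_def norm_minus_commute)
    have dX: "norm (X - c k) \<le> real p * \<epsilon>"
      using shift[of j p] jp k by (simp add: X_def)
    have nX: "norm X \<le> 1" using sandw[OF nuk[of p] nvk[of p], of "c j"] nc[OF j] by (simp add: X_def)
    have Xu: "X * u ^ p = u ^ p * c j" by (simp add: X_def mult.assoc VU)
    have Yu: "Y * u ^ j = u ^ j * c 0" by (simp add: Y_def mult.assoc VU)
    have c0X: "c 0 * X = c 0 * (X - c k)" using orth[of 0 k] k by (simp add: right_diff_distrib)
    have "c j * u ^ k * c j = c j * u ^ j * (u ^ p * c j)"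
      by (simp add: jp[symmetric] power_add mult.assoc)
    also have "\<dots> = ((c j - Y) * u ^ j + Y * u ^ j) * (X * u ^ p)"
      by (simp add: Xu algebra_simps)
    also have "\<dots> = (c j - Y) * u ^ j * X * u ^ p + u ^ j * (c 0 * X) * u ^ p"
    proof -
      have Yu2: "Y * (u ^ j * z) = u ^ j * (c 0 * z)" for z
        using Yu by (metis mult.assoc)
      show ?thesis by (simp add: Yu2 algebra_simps)
    qed
    also have "\<dots> = (c j - Y) * u ^ j * X * u ^ p + u ^ j * (c 0 * (X - c k)) * u ^ p"
      by (simp only: c0X)
    finally have eqn: "c j * u ^ k * c j = (c j - Y) * u ^ j * X * u ^ p + u ^ j * (c 0 * (X - c k)) * u ^ p" .
    have "norm (c j * u ^ k * c j)
        \<le> norm ((c j - Y) * u ^ j * X * u ^ p) + norm (u ^ j * (c 0 * (X - c k)) * u ^ p)"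
      unfolding eqn by (rule norm_triangle_ineq)
    also have "\<dots> \<le> real j * \<epsilon> + real p * \<epsilon>"
    proof (rule add_mono)
      have "norm ((c j - Y) * u ^ j * X * u ^ p) \<le> norm (c j - Y) * norm (u ^ j * X * u ^ p)"
        by (metis mult.assoc norm_mult_ineq)
      also have "\<dots> \<le> real j * \<epsilon> * 1"
      proof (rule mult_mono)
        show "norm (u ^ j * X * u ^ p) \<le> 1" using sandw[OF nuk[of j] nuk[of p], of X] nX by simp
      qed (use dY assms(6) in auto)
      finally show "norm ((c j - Y) * u ^ j * X * u ^ p) \<le> real j * \<epsilon>" by simp
      have "norm (u ^ j * (c 0 * (X - c k)) * u ^ p) \<le> norm (c 0 * (X - c k))"
        by (rule sandw[OF nuk[of j] nuk[of p]])
      also have "\<dots> \<le> norm (c 0) * norm (X - c k)" by (rule norm_mult_ineq)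
      also have "\<dots> \<le> 1 * (real p * \<epsilon>)"
        using nc[of 0] dX by (intro mult_mono) auto
      finally show "norm (u ^ j * (c 0 * (X - c k)) * u ^ p) \<le> real p * \<epsilon>" by simp
    qed
    also have "\<dots> = real k * \<epsilon>" using jp by (simp add: distrib_right[symmetric])
    finally show ?thesis .
  qed
  show ?thesis
  proof (intro allI impI ballI conjI)
    fix j k assume j: "j \<le> n" and "k \<in> {1..n}"
    then have k: "1 \<le> k" "k \<le> n" by auto
    have bound: "real k * \<epsilon> < 3 * real n * \<epsilon>"
    proof -
      have "real k \<le> real n" using k by simp
      also have "\<dots> < 3 * real n" using k by simp
      finally show ?thesis using assms(6) by simp
    qed
    show "norm (c j * u ^ k * c j) < 3 * real n * \<epsilon>"
      using key[OF j k] bound by linarith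
    have "adj (c j * u ^ k * c j) = c j * adj u ^ k * c j"
      by (simp add: adj_mult adj_power sa[OF j] mult.assoc)
    then have "norm (c j * adj u ^ k * c j) = norm (c j * u ^ k * c j)"
      by (metis norm_adj)
    then show "norm (c j * adj u ^ k * c j) < 3 * real n * \<epsilon>"
      using key[OF j k] bound by linarith
  qed
qed

end
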